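(* Let $b\ge1$, $q\ge2$, $n\ge b+1$ and $i\in[1,n-b+1]$. Then \[ |\{\boldsymbol{x}\in\Sigma_q^n: |\mathcal{D}_{1,b}(\boldsymbol{x})|=i\}|=q^b(q-1)^{i-1}\binom{n-b}{i-1}. \]
   Context: $\Sigma_q=\{0,\ldots,q-1\}$. A $b$-burst-deletion at position $i\in[1,n-b+1]$ transforms $x_1\cdots x_n$ into $x_1\cdots x_{i-1}x_{i+b}\cdots x_n$. $\mathcal{D}_{1,b}(\boldsymbol{x})$ is the set of all length-$(n-b)$ sequences obtainable from $\boldsymbol{x}$ by one $b$-burst-deletion. *)

theory Defs
  imports Main
begin

definition seqs :: "nat \<Rightarrow> nat \<Rightarrow> nat list set" where
  "seqs q n = {x. length x = n \<and> set x \<subseteq> {0..<q}}"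

text \<open>b-burst-deletion at (1-indexed) position i: x_1..x_{i-1} x_{i+b}..x_n.\<close>
definition burst_del :: "nat \<Rightarrow> nat \<Rightarrow> 'a list \<Rightarrow> 'a list" where
  "burst_del b i x = take (i - 1) x @ drop (i - 1 + b) x"

definition D1b :: "nat \<Rightarrow> 'a list \<Rightarrow> 'a list set" where
  "D1b b x = (\<lambda>i. burst_del b i x) ` {1..length x - b + 1}"

end

theory Submission
  imports Defs
begin

lemma card_img_breaks:
  fixes f :: "nat \<Rightarrow> 'a" and B :: "nat \<Rightarrow> bool"
  assumes "\<forall>i j. 1 \<le> i \<longrightarrow> i \<le> j \<longrightarrow> j \<le> Suc M \<longrightarrow>
             (f i = f j \<longleftrightarrow> (\<forall>p. i - 1 \<le> p \<and> p < j - 1 \<longrightarrow> \<not> B p))"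
  shows "card (f ` {1..Suc M}) = Suc (card {p. p < M \<and> B p})"
  using assms
proof (induction M)
  case 0
  then show ?case by simp
next
  case (Suc M)
  have IH: "card (f ` {1..Suc M}) = Suc (card {p. p < M \<and> B p})"
    using Suc.IH Suc.prems by auto
  have iv: "{1..Suc (Suc M)} = insert (Suc (Suc M)) {1..Suc M}" by auto
  have mem: "f (Suc (Suc M)) \<in> f ` {1..Suc M} \<longleftrightarrow> \<not> B M"
  proof
    assume "f (Suc (Suc M)) \<in> f ` {1..Suc M}"
    then obtain i where i: "i \<in> {1..Suc M}" "f i = f (Suc (Suc M))" by auto
    then show "\<not> B M" using Suc.prems[rule_format, of i "Suc (Suc M)"] by auto
  next
    assume "\<not> B M"
    then have "\<forall>p. Suc M - 1 \<le> p \<and> p < Suc (Suc M) - 1 \<longrightarrow> \<not> B p"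
      by (auto simp: less_Suc_eq)
    then have "f (Suc M) = f (Suc (Suc M))"
      using Suc.prems[rule_format, of "Suc M" "Suc (Suc M)"] by simp
    then show "f (Suc (Suc M)) \<in> f ` {1..Suc M}"
      by (intro image_eqI[where x="Suc M"]) auto
  qed
  have S: "{p. p < Suc M \<and> B p} = {p. p < M \<and> B p} \<union> (if B M then {M} else {})"
    by (auto simp: less_Suc_eq)
  show ?case
  proof (cases "B M")
    case True
    then have "card (f ` {1..Suc (Suc M)}) = Suc (card (f ` {1..Suc M}))"
      using mem iv by (simp add: card_insert_if)
    moreover have "card {p. p < Suc M \<and> B p} = Suc (card {p. p < M \<and> B p})"
      using S True by simp
    ultimately show ?thesis using IH by simp
  next
    case False
    then have "card (f ` {1..Suc (Suc M)}) = card (f ` {1..Suc M})"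
      using mem iv by (simp add: insert_absorb)
    moreover have "card {p. p < Suc M \<and> B p} = card {p. p < M \<and> B p}"
      using S False by simp
    ultimately show ?thesis using IH by simp
  qed
qed

lemma burst_del_len:
  assumes "1 \<le> i" "i \<le> length x - b + 1" "b \<le> length x"
  shows "length (burst_del b i x) = length x - b"
  using assms unfolding burst_del_def by auto

lemma burst_del_nth:
  assumes "1 \<le> i" "i \<le> length x - b + 1" "b \<le> length x" "p < length x - b"
  shows "burst_del b i x ! p = (if p < i - 1 then x ! p else x ! (p + b))"
proof -
  have l: "length (take (i - 1) x) = i - 1" using assms by auto
  show ?thesis
    using assms unfolding burst_del_def
    by (auto simp: nth_append l add.commute)
qed

lemma burst_del_eq:
  assumes "1 \<le> i" "i \<le> j" "j \<le> length x - b + 1" "b \<le> length x"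
  shows "burst_del b i x = burst_del b j x \<longleftrightarrow>
         (\<forall>p. i - 1 \<le> p \<and> p < j - 1 \<longrightarrow> \<not> x ! p \<noteq> x ! (p + b))"
proof -
  have L: "length (burst_del b i x) = length (burst_del b j x)"
    using assms burst_del_len[of i x b] burst_del_len[of j x b] by simp
  have "burst_del b i x = burst_del b j x \<longleftrightarrow>
     (\<forall>p < length x - b. burst_del b i x ! p = burst_del b j x ! p)"
    using L burst_del_len[of i x b] assms by (simp add: list_eq_iff_nth_eq)
  also have "\<dots> \<longleftrightarrow> (\<forall>p < length x - b. (if p < i - 1 then x ! p else x ! (p + b))
        = (if p < j - 1 then x ! p else x ! (p + b)))"
    using assms burst_del_nth[of i x b] burst_del_nth[of j x b] by auto
  also have "\<dots> \<longleftrightarrow> (\<forall>p. i - 1 \<le> p \<and> p < j - 1 \<longrightarrow> \<not> x ! p \<noteq> x ! (p + b))"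
  proof
    assume H: "\<forall>p < length x - b. (if p < i - 1 then x ! p else x ! (p + b))
        = (if p < j - 1 then x ! p else x ! (p + b))"
    show "\<forall>p. i - 1 \<le> p \<and> p < j - 1 \<longrightarrow> \<not> x ! p \<noteq> x ! (p + b)"
    proof (intro allI impI)
      fix p assume "i - 1 \<le> p \<and> p < j - 1"
      then show "\<not> x ! p \<noteq> x ! (p + b)" using H[rule_format, of p] assms by auto
    qed
  next
    assume H: "\<forall>p. i - 1 \<le> p \<and> p < j - 1 \<longrightarrow> \<not> x ! p \<noteq> x ! (p + b)"
    have ij: "i - 1 \<le> j - 1" using assms(2) by simp
    show "\<forall>p < length x - b. (if p < i - 1 then x ! p else x ! (p + b))
        = (if p < j - 1 then x ! p else x ! (p + b))"
    proof (intro allI impI)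
      fix p assume "p < length x - b"
      show "(if p < i - 1 then x ! p else x ! (p + b))
        = (if p < j - 1 then x ! p else x ! (p + b))"
        using H[rule_format, of p] ij by (cases "p < i - 1"; cases "p < j - 1") auto
    qed
  qed
  finally show ?thesis .
qed

definition brk :: "nat \<Rightarrow> nat list \<Rightarrow> nat" where
  "brk b x = card {p. p < length x - b \<and> x ! p \<noteq> x ! (p + b)}"

lemma card_D1b:
  assumes "b \<le> length x"
  shows "card (D1b b x) = Suc (brk b x)"
proof -
  have e: "length x - b + 1 = Suc (length x - b)" by simp
  show ?thesis
    unfolding D1b_def brk_def e
    apply (rule card_img_breaks)
    using burst_del_eq[of _ _ x b] assms by auto
qed

definition cnt :: "nat \<Rightarrow> nat \<Rightarrow> nat \<Rightarrow> nat \<Rightarrow> nat" where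
  "cnt b q m k = card {x \<in> seqs q (b + m). brk b x = k}"

lemma finite_seqs: "finite (seqs q n)"
proof -
  have "seqs q n = {xs. set xs \<subseteq> {0..<q} \<and> length xs = n}" unfolding seqs_def by auto
  then show ?thesis using finite_lists_length_eq[of "{0..<q}" n] by simp
qed

lemma card_seqs: "card (seqs q n) = q ^ n"
proof -
  have "seqs q n = {xs. set xs \<subseteq> {0..<q} \<and> length xs = n}" unfolding seqs_def by auto
  then show ?thesis using card_lists_length_eq[of "{0..<q}" n] by simp
qed

lemma brk_snoc:
  assumes "length y = b + m" "1 \<le> b"
  shows "brk b (y @ [c]) = brk b y + (if y ! m \<noteq> c then 1 else 0)"
proof -
  have l1: "length (y @ [c]) - b = Suc m" "length y - b = m" using assms by auto
  have A: "{p. p < Suc m \<and> (y @ [c]) ! p \<noteq> (y @ [c]) ! (p + b)}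
      = insert m {p. p < m \<and> y ! p \<noteq> y ! (p + b)}" if "y ! m \<noteq> c"
  proof (rule set_eqI)
    fix p show "p \<in> {p. p < Suc m \<and> (y @ [c]) ! p \<noteq> (y @ [c]) ! (p + b)} \<longleftrightarrow>
       p \<in> insert m {p. p < m \<and> y ! p \<noteq> y ! (p + b)}"
    proof (cases "p < m")
      case True then show ?thesis using assms by (simp add: nth_append)
    next
      case False then show ?thesis using assms that by (cases "p = m") (auto simp: nth_append)
    qed
  qed
  have B: "{p. p < Suc m \<and> (y @ [c]) ! p \<noteq> (y @ [c]) ! (p + b)}
      = {p. p < m \<and> y ! p \<noteq> y ! (p + b)}" if "\<not> y ! m \<noteq> c"
  proof (rule set_eqI)
    fix p show "p \<in> {p. p < Suc m \<and> (y @ [c]) ! p \<noteq> (y @ [c]) ! (p + b)} \<longleftrightarrow>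
       p \<in> {p. p < m \<and> y ! p \<noteq> y ! (p + b)}"
    proof (cases "p < m")
      case True then show ?thesis using assms by (simp add: nth_append)
    next
      case False then show ?thesis using assms that by (cases "p = m") (auto simp: nth_append)
    qed
  qed
  show ?thesis
  proof (cases "y ! m \<noteq> c")
    case True
    then show ?thesis unfolding brk_def l1 A[OF True] by simp
  next
    case False
    then show ?thesis unfolding brk_def l1 B[OF False] by simp
  qed
qed

lemma cnt_step:
  assumes "1 \<le> b"
  shows "cnt b q (Suc m) k = cnt b q m k + (q - 1) * card {y \<in> seqs q (b + m). Suc (brk b y) = k}"
proof -
  define A where "A = {x \<in> seqs q (b + m). brk b x = k}"
  define C where "C = {y \<in> seqs q (b + m). Suc (brk b y) = k}"
  define G where "G = (SIGMA y:C. {c. c < q \<and> c \<noteq> y ! m})"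
  have fA: "finite A" "finite C" unfolding A_def C_def using finite_seqs by auto
  have eq: "{x \<in> seqs q (b + Suc m). brk b x = k} =
      (\<lambda>y. y @ [y ! m]) ` A \<union> (\<lambda>(y, c). y @ [c]) ` G"
  proof (intro equalityI subsetI)
    fix x assume x: "x \<in> {x \<in> seqs q (b + Suc m). brk b x = k}"
    then have lx: "length x = Suc (b + m)" and sx: "set x \<subseteq> {0..<q}" and bk: "brk b x = k"
      unfolding seqs_def by auto
    define y where "y = butlast x"
    define c where "c = last x"
    have xy: "x = y @ [c]" unfolding y_def c_def using lx
      by (metis append_butlast_last_id list.size(3) nat.distinct(1))
    have ly: "length y = b + m" using lx y_def by simp
    have sy: "y \<in> seqs q (b + m)" using sx ly xy unfolding seqs_def by auto
    have cq: "c < q" using sx xy by auto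
    have bs: "brk b x = brk b y + (if y ! m \<noteq> c then 1 else 0)"
      using xy brk_snoc[OF ly assms] by simp
    show "x \<in> (\<lambda>y. y @ [y ! m]) ` A \<union> (\<lambda>(y, c). y @ [c]) ` G"
    proof (cases "y ! m = c")
      case True
      then have "y \<in> A" using sy bs bk unfolding A_def by auto
      then show ?thesis using xy True by auto
    next
      case False
      then have "(y, c) \<in> G" using sy bs bk cq unfolding G_def C_def by auto
      then show ?thesis using xy by force
    qed
  next
    fix x assume "x \<in> (\<lambda>y. y @ [y ! m]) ` A \<union> (\<lambda>(y, c). y @ [c]) ` G"
    then show "x \<in> {x \<in> seqs q (b + Suc m). brk b x = k}"
    proof
      assume "x \<in> (\<lambda>y. y @ [y ! m]) ` A"
      then obtain y where y: "y \<in> A" "x = y @ [y ! m]" by auto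
      then have ly: "length y = b + m" "set y \<subseteq> {0..<q}" unfolding A_def seqs_def by auto
      have "y ! m \<in> set y" using ly assms by simp
      then show ?thesis using y ly brk_snoc[OF ly(1) assms, of "y ! m"]
        unfolding A_def seqs_def by auto
    next
      assume "x \<in> (\<lambda>(y, c). y @ [c]) ` G"
      then obtain y c where y: "(y, c) \<in> G" "x = y @ [c]" by auto
      then have ly: "length y = b + m" "set y \<subseteq> {0..<q}" "c < q" "c \<noteq> y ! m"
        "Suc (brk b y) = k"
        unfolding G_def C_def seqs_def by auto
      then show ?thesis using y brk_snoc[OF ly(1) assms, of c]
        unfolding seqs_def by auto
    qed
  qed
  have inj1: "inj_on (\<lambda>y. y @ [y ! m]) A" by (rule inj_onI) simp
  have inj2: "inj_on (\<lambda>(y, c). y @ [c]) G" by (rule inj_onI) auto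
  have disj: "(\<lambda>y. y @ [y ! m]) ` A \<inter> (\<lambda>(y, c). y @ [c]) ` G = {}"
    unfolding G_def by auto
  have fG: "finite G" unfolding G_def using fA by auto
  have cG: "card G = (q - 1) * card C"
  proof -
    have "card G = (\<Sum>y\<in>C. card {c. c < q \<and> c \<noteq> y ! m})"
      unfolding G_def using fA by (simp add: card_SigmaI)
    also have "\<dots> = (\<Sum>y\<in>C. q - 1)"
    proof (rule sum.cong)
      fix y assume "y \<in> C"
      then have ly: "length y = b + m" "set y \<subseteq> {0..<q}" unfolding C_def seqs_def by auto
      have "y ! m \<in> set y" using ly assms by simp
      then have "y ! m < q" using ly by auto
      moreover have "{c. c < q \<and> c \<noteq> y ! m} = {0..<q} - {y ! m}" by auto
      ultimately show "card {c. c < q \<and> c \<noteq> y ! m} = q - 1" by simp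
    qed simp
    finally show ?thesis by simp
  qed
  have "cnt b q (Suc m) k = card ((\<lambda>y. y @ [y ! m]) ` A) + card ((\<lambda>(y, c). y @ [c]) ` G)"
    unfolding cnt_def eq using fA fG disj by (simp add: card_Un_disjoint)
  also have "\<dots> = card A + card G" using inj1 inj2 by (simp add: card_image)
  finally show ?thesis using cG unfolding cnt_def A_def C_def by simp
qed

lemma cnt_formula:
  assumes "1 \<le> b"
  shows "cnt b q m k = q ^ b * (q - 1) ^ k * (m choose k)"
proof (induction m arbitrary: k)
  case 0
  have "\<And>x. x \<in> seqs q b \<Longrightarrow> brk b x = 0" unfolding seqs_def brk_def by auto
  then have "{x \<in> seqs q (b + 0). brk b x = k} = (if k = 0 then seqs q b else {})" by auto
  then show ?case unfolding cnt_def by (simp add: card_seqs)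
next
  case (Suc m)
  show ?case
  proof (cases k)
    case 0
    then have "{y \<in> seqs q (b + m). Suc (brk b y) = k} = {}" by auto
    then show ?thesis using cnt_step[OF assms, of q m k] Suc.IH 0 by simp
  next
    case (Suc k')
    then have "card {y \<in> seqs q (b + m). Suc (brk b y) = k} = cnt b q m k'"
      unfolding cnt_def by simp
    then have "cnt b q (Suc m) k = cnt b q m (Suc k') + (q - 1) * cnt b q m k'"
      using cnt_step[OF assms, of q m k] Suc by simp
    also have "\<dots> = q ^ b * (q - 1) ^ Suc k' * (m choose Suc k')
        + q ^ b * (q - 1) ^ Suc k' * (m choose k')"
      using Suc.IH[of "Suc k'"] Suc.IH[of k'] by (simp add: ac_simps)
    also have "\<dots> = q ^ b * (q - 1) ^ Suc k' * (Suc m choose Suc k')"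
      by (simp add: add_mult_distrib2)
    finally show ?thesis using Suc by simp
  qed
qed

theorem lemma4p4:
  fixes b q n i :: nat
  assumes "b \<ge> 1" and "q \<ge> 2" and "n \<ge> b + 1"
    and "1 \<le> i" and "i \<le> n - b + 1"
  shows "card {x \<in> seqs q n. card (D1b b x) = i}
         = q ^ b * (q - 1) ^ (i - 1) * ((n - b) choose (i - 1))"
proof -
  have nb: "b + (n - b) = n" using assms by simp
  have "{x \<in> seqs q n. card (D1b b x) = i} = {x \<in> seqs q n. brk b x = i - 1}"
  proof (rule Collect_cong)
    fix x
    show "(x \<in> seqs q n \<and> card (D1b b x) = i) = (x \<in> seqs q n \<and> brk b x = i - 1)"
    proof (cases "x \<in> seqs q n")
      case True
      then have "b \<le> length x" using assms unfolding seqs_def by simp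
      then have "card (D1b b x) = Suc (brk b x)" by (rule card_D1b)
      then show ?thesis using assms(4) True by auto
    qed simp
  qed
  also have "\<dots> = {x \<in> seqs q (b + (n - b)). brk b x = i - 1}" by (simp only: nb)
  finally show ?thesis using cnt_formula[OF assms(1), of q "n - b" "i - 1"] unfolding cnt_def by simp
qed

end
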